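(* Let $D,Q,P$ be simplicial abelian groups and $s\colon D\to P$, $f\colon Q\to P$ simplicial homomorphisms. Suppose $D$ is free and $m$-connected ($m\in\mathbb N$) and $f$ is surjective. Then there exists a simplicial homomorphism $t\colon D\to Q$ such that $f\circ t|_{D_{(m)}}=s|_{D_{(m)}}$.
   Context: A simplicial abelian group $D$ is free if each $D_q$ is a free abelian group. $D_{(m)}\subset D$ denotes the $m$-skeleton (the simplicial subset generated by simplices of dimension $\le m$). *)

theory Defs
  imports "HOL-Algebra.Free_Abelian_Groups"
begin

definition simplicial_abgroup ::
  "(nat \<Rightarrow> ('a, 'm) monoid_scheme) \<Rightarrow> (nat \<Rightarrow> nat \<Rightarrow> 'a \<Rightarrow> 'a) \<Rightarrow> (nat \<Rightarrow> nat \<Rightarrow> 'a \<Rightarrow> 'a) \<Rightarrow> bool"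
where
  "simplicial_abgroup G d s \<longleftrightarrow>
     (\<forall>q. comm_group (G q)) \<and>
     (\<forall>q i. i \<le> Suc q \<longrightarrow> d q i \<in> hom (G (Suc q)) (G q)) \<and>
     (\<forall>q i. i \<le> q \<longrightarrow> s q i \<in> hom (G q) (G (Suc q))) \<and>
     (\<forall>q i j x. i < j \<and> j \<le> Suc (Suc q) \<and> x \<in> carrier (G (Suc (Suc q))) \<longrightarrow>
        d q i (d (Suc q) j x) = d q (j - 1) (d (Suc q) i x)) \<and>
     (\<forall>q i j x. i \<le> j \<and> j \<le> q \<and> x \<in> carrier (G q) \<longrightarrow>
        s (Suc q) i (s q j x) = s (Suc q) (Suc j) (s q i x)) \<and>
     (\<forall>q i j x. i < j \<and> j \<le> Suc q \<and> x \<in> carrier (G (Suc q)) \<longrightarrow>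
        d (Suc q) i (s (Suc q) j x) = s q (j - 1) (d q i x)) \<and>
     (\<forall>q j x. j \<le> q \<and> x \<in> carrier (G q) \<longrightarrow>
        d q j (s q j x) = x \<and> d q (Suc j) (s q j x) = x) \<and>
     (\<forall>q i j x. Suc j < i \<and> i \<le> Suc (Suc q) \<and> x \<in> carrier (G (Suc q)) \<longrightarrow>
        d (Suc q) i (s (Suc q) j x) = s q j (d q (i - 1) x))"

definition simplicial_hom ::
  "(nat \<Rightarrow> ('a, 'm) monoid_scheme) \<Rightarrow> (nat \<Rightarrow> nat \<Rightarrow> 'a \<Rightarrow> 'a) \<Rightarrow> (nat \<Rightarrow> nat \<Rightarrow> 'a \<Rightarrow> 'a) \<Rightarrow>
   (nat \<Rightarrow> ('b, 'n) monoid_scheme) \<Rightarrow> (nat \<Rightarrow> nat \<Rightarrow> 'b \<Rightarrow> 'b) \<Rightarrow> (nat \<Rightarrow> nat \<Rightarrow> 'b \<Rightarrow> 'b) \<Rightarrow>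
   (nat \<Rightarrow> 'a \<Rightarrow> 'b) \<Rightarrow> bool"
where
  "simplicial_hom G dG sG H dH sH t \<longleftrightarrow>
     (\<forall>q. t q \<in> hom (G q) (H q)) \<and>
     (\<forall>q i x. i \<le> Suc q \<and> x \<in> carrier (G (Suc q)) \<longrightarrow> t q (dG q i x) = dH q i (t (Suc q) x)) \<and>
     (\<forall>q i x. i \<le> q \<and> x \<in> carrier (G q) \<longrightarrow> t (Suc q) (sG q i x) = sH q i (t q x))"

definition free_simplicial :: "(nat \<Rightarrow> ('a, 'm) monoid_scheme) \<Rightarrow> bool" where
  "free_simplicial G \<longleftrightarrow> (\<forall>q. \<exists>B :: 'a set. G q \<cong> free_Abelian_group B)"

text \<open>Normalized (Moore) complex: N_0 = G_0, N_{q+1} = elements of G_{q+1} killed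
 by the faces d_1,...,d_{q+1}; differential d_0.\<close>

definition moore :: "(nat \<Rightarrow> ('a, 'm) monoid_scheme) \<Rightarrow> (nat \<Rightarrow> nat \<Rightarrow> 'a \<Rightarrow> 'a) \<Rightarrow> nat \<Rightarrow> 'a set" where
  "moore G d n = (case n of 0 \<Rightarrow> carrier (G 0)
     | Suc q \<Rightarrow> {x \<in> carrier (G (Suc q)). \<forall>i\<in>{1..Suc q}. d q i x = \<one>\<^bsub>G q\<^esub>})"

text \<open>m-connected: pi_n(G) = H_n(Moore complex) vanishes for all n <= m.\<close>

definition m_connected :: "nat \<Rightarrow> (nat \<Rightarrow> ('a, 'm) monoid_scheme) \<Rightarrow> (nat \<Rightarrow> nat \<Rightarrow> 'a \<Rightarrow> 'a) \<Rightarrow> bool" where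
  "m_connected m G d \<longleftrightarrow>
     (\<forall>n \<le> m. \<forall>y \<in> moore G d n.
        (case n of 0 \<Rightarrow> True | Suc q \<Rightarrow> d q 0 y = \<one>\<^bsub>G q\<^esub>) \<longrightarrow>
        (\<exists>x \<in> moore G d (Suc n). d n 0 x = y))"

inductive_set skeleton ::
  "(nat \<Rightarrow> ('a, 'm) monoid_scheme) \<Rightarrow> (nat \<Rightarrow> nat \<Rightarrow> 'a \<Rightarrow> 'a) \<Rightarrow> (nat \<Rightarrow> nat \<Rightarrow> 'a \<Rightarrow> 'a) \<Rightarrow> nat \<Rightarrow> (nat \<times> 'a) set"
  for G d s m
where
  gen: "k \<le> m \<Longrightarrow> x \<in> carrier (G k) \<Longrightarrow> (k, x) \<in> skeleton G d s m"
| face: "(Suc q, x) \<in> skeleton G d s m \<Longrightarrow> i \<le> Suc q \<Longrightarrow> (q, d q i x) \<in> skeleton G d s m"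
| degen: "(q, x) \<in> skeleton G d s m \<Longrightarrow> i \<le> q \<Longrightarrow> (Suc q, s q i x) \<in> skeleton G d s m"

end

theory Submission
  imports Defs
begin


lemma hom_one': "group G \<Longrightarrow> group H \<Longrightarrow> h \<in> hom G H \<Longrightarrow> h \<one>\<^bsub>G\<^esub> = \<one>\<^bsub>H\<^esub>"
  by (simp add: group_hom.hom_one group_hom_axioms_def group_hom_def)
lemma hom_inv': "group G \<Longrightarrow> group H \<Longrightarrow> h \<in> hom G H \<Longrightarrow> x \<in> carrier G \<Longrightarrow> h (inv\<^bsub>G\<^esub> x) = inv\<^bsub>H\<^esub> (h x)"
  by (simp add: group_hom.hom_inv group_hom_axioms_def group_hom_def)
lemma hom_mult': "h \<in> hom G H \<Longrightarrow> x \<in> carrier G \<Longrightarrow> y \<in> carrier G \<Longrightarrow> h (x \<otimes>\<^bsub>G\<^esub> y) = h x \<otimes>\<^bsub>H\<^esub> h y"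
  by (simp add: hom_def)
lemma hom_car': "h \<in> hom G H \<Longrightarrow> x \<in> carrier G \<Longrightarrow> h x \<in> carrier H"
  by (auto simp add: hom_def)

lemma hom_prod:
  assumes "comm_group H" "f \<in> hom G H" "g \<in> hom G H"
  shows "(\<lambda>x. f x \<otimes>\<^bsub>H\<^esub> g x) \<in> hom G H"
proof -
  interpret H: comm_group H by fact
  show ?thesis using assms(2,3) unfolding hom_def by (auto simp: H.m_ac Pi_iff)
qed

lemma hom_invf:
  assumes "comm_group H" "group G" "f \<in> hom G H"
  shows "(\<lambda>x. inv\<^bsub>H\<^esub> f x) \<in> hom G H"
proof -
  interpret H: comm_group H by fact
  show ?thesis using assms(3) unfolding hom_def by (auto simp: H.inv_mult Pi_iff)
qed

lemma hom_comp': "f \<in> hom G H \<Longrightarrow> g \<in> hom H K \<Longrightarrow> (\<lambda>x. g (f x)) \<in> hom G K"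
  using hom_compose[of f G H g K] by (simp add: comp_def)

locale sab =
  fixes G :: "nat \<Rightarrow> ('a, 'm) monoid_scheme" and d s :: "nat \<Rightarrow> nat \<Rightarrow> 'a \<Rightarrow> 'a"
  assumes sa: "simplicial_abgroup G d s"
begin

lemmas sp = sa[unfolded simplicial_abgroup_def]
lemma cg: "comm_group (G q)" using sp[THEN conjunct1] by blast
lemma gp: "group (G q)" using cg[of q] by (simp add: comm_group_def)
lemma mn: "monoid (G q)" using gp[of q] by (simp add: group_def)
lemma one_c[simp]: "\<one>\<^bsub>G q\<^esub> \<in> carrier (G q)" by (rule monoid.one_closed[OF mn])
lemma m_c[simp]: "x \<in> carrier (G q) \<Longrightarrow> y \<in> carrier (G q) \<Longrightarrow> x \<otimes>\<^bsub>G q\<^esub> y \<in> carrier (G q)" by (rule monoid.m_closed[OF mn])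
lemma inv_c[simp]: "x \<in> carrier (G q) \<Longrightarrow> inv\<^bsub>G q\<^esub> x \<in> carrier (G q)" by (rule group.inv_closed[OF gp])
lemma l_one[simp]: "x \<in> carrier (G q) \<Longrightarrow> \<one>\<^bsub>G q\<^esub> \<otimes>\<^bsub>G q\<^esub> x = x" by (rule monoid.l_one[OF mn])
lemma r_one[simp]: "x \<in> carrier (G q) \<Longrightarrow> x \<otimes>\<^bsub>G q\<^esub> \<one>\<^bsub>G q\<^esub> = x" by (rule monoid.r_one[OF mn])
lemma inv_one[simp]: "inv\<^bsub>G q\<^esub> \<one>\<^bsub>G q\<^esub> = \<one>\<^bsub>G q\<^esub>" by (rule monoid.inv_one[OF mn])
lemma r_inv[simp]: "x \<in> carrier (G q) \<Longrightarrow> x \<otimes>\<^bsub>G q\<^esub> inv\<^bsub>G q\<^esub> x = \<one>\<^bsub>G q\<^esub>" by (rule group.r_inv[OF gp])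
lemma l_inv[simp]: "x \<in> carrier (G q) \<Longrightarrow> inv\<^bsub>G q\<^esub> x \<otimes>\<^bsub>G q\<^esub> x = \<one>\<^bsub>G q\<^esub>" by (rule group.l_inv[OF gp])
lemma m_assoc: "x \<in> carrier (G q) \<Longrightarrow> y \<in> carrier (G q) \<Longrightarrow> z \<in> carrier (G q) \<Longrightarrow> x \<otimes>\<^bsub>G q\<^esub> y \<otimes>\<^bsub>G q\<^esub> z = x \<otimes>\<^bsub>G q\<^esub> (y \<otimes>\<^bsub>G q\<^esub> z)" by (rule monoid.m_assoc[OF mn])
lemma m_comm: "x \<in> carrier (G q) \<Longrightarrow> y \<in> carrier (G q) \<Longrightarrow> x \<otimes>\<^bsub>G q\<^esub> y = y \<otimes>\<^bsub>G q\<^esub> x" using cg[of q] by (simp add: comm_group_def comm_monoid.m_comm)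
lemma d_hom: "i \<le> Suc q \<Longrightarrow> d q i \<in> hom (G (Suc q)) (G q)" using sp[THEN conjunct2, THEN conjunct1] by blast
lemma s_hom: "i \<le> q \<Longrightarrow> s q i \<in> hom (G q) (G (Suc q))" using sp[THEN conjunct2, THEN conjunct2, THEN conjunct1] by blast
lemma d_car: "i \<le> Suc q \<Longrightarrow> x \<in> carrier (G (Suc q)) \<Longrightarrow> d q i x \<in> carrier (G q)"
  by (rule hom_car'[OF d_hom])
lemma s_car: "i \<le> q \<Longrightarrow> x \<in> carrier (G q) \<Longrightarrow> s q i x \<in> carrier (G (Suc q))"
  by (rule hom_car'[OF s_hom])
lemma d_mult: "i \<le> Suc q \<Longrightarrow> x \<in> carrier (G (Suc q)) \<Longrightarrow> y \<in> carrier (G (Suc q)) \<Longrightarrow> d q i (x \<otimes>\<^bsub>G (Suc q)\<^esub> y) = d q i x \<otimes>\<^bsub>G q\<^esub> d q i y"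
  by (rule hom_mult'[OF d_hom])
lemma s_mult: "i \<le> q \<Longrightarrow> x \<in> carrier (G q) \<Longrightarrow> y \<in> carrier (G q) \<Longrightarrow> s q i (x \<otimes>\<^bsub>G q\<^esub> y) = s q i x \<otimes>\<^bsub>G (Suc q)\<^esub> s q i y"
  by (rule hom_mult'[OF s_hom])
lemma d_one: "i \<le> Suc q \<Longrightarrow> d q i \<one>\<^bsub>G (Suc q)\<^esub> = \<one>\<^bsub>G q\<^esub>"
  by (rule hom_one'[OF gp gp d_hom])
lemma s_one: "i \<le> q \<Longrightarrow> s q i \<one>\<^bsub>G q\<^esub> = \<one>\<^bsub>G (Suc q)\<^esub>"
  by (rule hom_one'[OF gp gp s_hom])
lemma d_inv: "i \<le> Suc q \<Longrightarrow> x \<in> carrier (G (Suc q)) \<Longrightarrow> d q i (inv\<^bsub>G (Suc q)\<^esub> x) = inv\<^bsub>G q\<^esub> d q i x"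
  by (rule hom_inv'[OF gp gp d_hom])
lemma s_inv: "i \<le> q \<Longrightarrow> x \<in> carrier (G q) \<Longrightarrow> s q i (inv\<^bsub>G q\<^esub> x) = inv\<^bsub>G (Suc q)\<^esub> s q i x"
  by (rule hom_inv'[OF gp gp s_hom])

lemma dd: "i < j \<Longrightarrow> j \<le> Suc (Suc q) \<Longrightarrow> x \<in> carrier (G (Suc (Suc q))) \<Longrightarrow>
        d q i (d (Suc q) j x) = d q (j - 1) (d (Suc q) i x)"
  using sp[THEN conjunct2, THEN conjunct2, THEN conjunct2, THEN conjunct1] by blast
lemma ss: "i \<le> j \<Longrightarrow> j \<le> q \<Longrightarrow> x \<in> carrier (G q) \<Longrightarrow>
        s (Suc q) i (s q j x) = s (Suc q) (Suc j) (s q i x)"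
  using sp[THEN conjunct2, THEN conjunct2, THEN conjunct2, THEN conjunct2, THEN conjunct1] by blast
lemma ds_lt: "i < j \<Longrightarrow> j \<le> Suc q \<Longrightarrow> x \<in> carrier (G (Suc q)) \<Longrightarrow>
        d (Suc q) i (s (Suc q) j x) = s q (j - 1) (d q i x)"
  using sp[THEN conjunct2, THEN conjunct2, THEN conjunct2, THEN conjunct2, THEN conjunct2, THEN conjunct1] by blast
lemma ds_eq: "j \<le> q \<Longrightarrow> x \<in> carrier (G q) \<Longrightarrow> d q j (s q j x) = x"
  using sp[THEN conjunct2, THEN conjunct2, THEN conjunct2, THEN conjunct2, THEN conjunct2, THEN conjunct2, THEN conjunct1] by blast
lemma ds_eq2: "j \<le> q \<Longrightarrow> x \<in> carrier (G q) \<Longrightarrow> d q (Suc j) (s q j x) = x"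
  using sp[THEN conjunct2, THEN conjunct2, THEN conjunct2, THEN conjunct2, THEN conjunct2, THEN conjunct2, THEN conjunct1] by blast
lemma ds_gt: "Suc j < i \<Longrightarrow> i \<le> Suc (Suc q) \<Longrightarrow> x \<in> carrier (G (Suc q)) \<Longrightarrow>
        d (Suc q) i (s (Suc q) j x) = s q j (d q (i - 1) x)"
  using sp[THEN conjunct2, THEN conjunct2, THEN conjunct2, THEN conjunct2, THEN conjunct2, THEN conjunct2, THEN conjunct2] by blast

abbreviation N where "N n \<equiv> moore G d n"

lemma N0: "N 0 = carrier (G 0)" by (simp add: moore_def)
lemma NS: "x \<in> N (Suc q) \<longleftrightarrow> x \<in> carrier (G (Suc q)) \<and> (\<forall>i\<in>{1..Suc q}. d q i x = \<one>\<^bsub>G q\<^esub>)"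
  by (simp add: moore_def)
lemma N_car: "x \<in> N n \<Longrightarrow> x \<in> carrier (G n)"
  by (cases n) (auto simp: moore_def)

lemma N_one: "\<one>\<^bsub>G n\<^esub> \<in> N n"
  by (cases n) (auto simp: moore_def d_one monoid.one_closed[OF mn])
lemma N_mult: "x \<in> N n \<Longrightarrow> y \<in> N n \<Longrightarrow> x \<otimes>\<^bsub>G n\<^esub> y \<in> N n"
proof (cases n)
  case 0 then show "x \<in> N n \<Longrightarrow> y \<in> N n \<Longrightarrow> ?thesis" by (simp add: moore_def group.subgroup_self[OF gp] subgroup.m_closed)
next
  case (Suc q)
  show "x \<in> N n \<Longrightarrow> y \<in> N n \<Longrightarrow> ?thesis" unfolding Suc NS
    by (auto simp: d_mult group.subgroup_self[OF gp] subgroup.m_closed monoid.l_one[OF mn] monoid.one_closed[OF mn])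
qed
lemma N_inv: "x \<in> N n \<Longrightarrow> inv\<^bsub>G n\<^esub> x \<in> N n"
proof (cases n)
  case 0 then show "x \<in> N n \<Longrightarrow> ?thesis" by (simp add: moore_def group.inv_closed[OF gp])
next
  case (Suc q)
  show "x \<in> N n \<Longrightarrow> ?thesis" unfolding Suc NS
    by (auto simp: d_inv group.inv_closed[OF gp] monoid.inv_one[OF mn])
qed

lemma N_d0: "x \<in> N (Suc q) \<Longrightarrow> d q 0 x \<in> N q"
proof (cases q)
  case 0 then show "x \<in> N (Suc q) \<Longrightarrow> ?thesis" by (simp add: moore_def d_car)
next
  case (Suc q')
  assume x: "x \<in> N (Suc q)"
  have "d q' i (d q 0 x) = \<one>\<^bsub>G q'\<^esub>" if "i \<in> {1..Suc q'}" for i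
  proof -
    have "d q' 0 (d (Suc q') (Suc i) x) = d q' i (d (Suc q') 0 x)"
      using dd[of 0 "Suc i" q' x] that x Suc by (auto simp: N_car)
    moreover have "d q (Suc i) x = \<one>\<^bsub>G q\<^esub>" using x that Suc by (auto simp: NS)
    ultimately show ?thesis using Suc d_one by auto
  qed
  then show ?thesis using x Suc by (auto simp: NS d_car N_car)
qed

lemma N_dd0: "x \<in> N (Suc (Suc q)) \<Longrightarrow> d q 0 (d (Suc q) 0 x) = \<one>\<^bsub>G q\<^esub>"
proof -
  assume x: "x \<in> N (Suc (Suc q))"
  have "d q 0 (d (Suc q) 1 x) = d q 0 (d (Suc q) 0 x)"
    using dd[of 0 1 q x] x by (auto simp: N_car)
  moreover have "d (Suc q) 1 x = \<one>\<^bsub>G (Suc q)\<^esub>" using x by (auto simp: NS)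
  ultimately show ?thesis using d_one by auto
qed

definition e :: "nat \<Rightarrow> nat \<Rightarrow> 'a \<Rightarrow> 'a" where
  "e q j x = x \<otimes>\<^bsub>G (Suc q)\<^esub> inv\<^bsub>G (Suc q)\<^esub> (s q j (d q (Suc j) x))"

lemma e_hom: "j \<le> q \<Longrightarrow> e q j \<in> hom (G (Suc q)) (G (Suc q))"
proof -
  assume j: "j \<le> q"
  have h1: "(\<lambda>x. s q j (d q (Suc j) x)) \<in> hom (G (Suc q)) (G (Suc q))"
    by (rule hom_comp'[OF d_hom s_hom]) (use j in auto)
  have h2: "(\<lambda>x. inv\<^bsub>G (Suc q)\<^esub> s q j (d q (Suc j) x)) \<in> hom (G (Suc q)) (G (Suc q))"
    by (rule hom_invf[OF cg gp h1])
  have h3: "(\<lambda>x. x) \<in> hom (G (Suc q)) (G (Suc q))" by (simp add: hom_def)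
  have "(\<lambda>x. x \<otimes>\<^bsub>G (Suc q)\<^esub> inv\<^bsub>G (Suc q)\<^esub> s q j (d q (Suc j) x)) \<in> hom (G (Suc q)) (G (Suc q))"
    by (rule hom_prod[OF cg h3 h2])
  then show ?thesis unfolding e_def[abs_def] .
qed

lemma e_car: "j \<le> q \<Longrightarrow> x \<in> carrier (G (Suc q)) \<Longrightarrow> e q j x \<in> carrier (G (Suc q))"
  by (rule hom_car'[OF e_hom])

lemma e_decomp: "j \<le> q \<Longrightarrow> x \<in> carrier (G (Suc q)) \<Longrightarrow> e q j x \<otimes>\<^bsub>G (Suc q)\<^esub> s q j (d q (Suc j) x) = x"
  unfolding e_def using s_car d_car by (simp add: group.inv_solve_right'[OF gp] monoid.m_assoc[OF mn]
      group.l_inv[OF gp] monoid.r_one[OF mn] group.inv_closed[OF gp])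

lemma e_N: "j \<le> q \<Longrightarrow> x \<in> N (Suc q) \<Longrightarrow> e q j x = x"
  unfolding e_def by (auto simp: NS s_one monoid.inv_one[OF mn] monoid.r_one[OF mn])

lemma e_pres: assumes j: "j \<le> q" and x: "x \<in> carrier (G (Suc q))"
  and h: "\<forall>l. Suc j < l \<and> l \<le> Suc q \<longrightarrow> d q l x = \<one>\<^bsub>G q\<^esub>"
  shows "\<forall>l. j < l \<and> l \<le> Suc q \<longrightarrow> d q l (e q j x) = \<one>\<^bsub>G q\<^esub>"
proof (intro allI impI)
  fix l assume l: "j < l \<and> l \<le> Suc q"
  have y: "d q (Suc j) x \<in> carrier (G q)" using j x d_car by auto
  show "d q l (e q j x) = \<one>\<^bsub>G q\<^esub>"
  proof (cases "l = Suc j")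
    case True
    then show ?thesis unfolding e_def using j x y
      by (simp add: d_mult d_inv s_car group.inv_closed[OF gp] ds_eq2 d_car group.r_inv[OF gp])
  next
    case False
    then have l2: "Suc j < l" using l by auto
    then obtain q' where q: "q = Suc q'" using l by (cases q) auto
    have "d q l (s q j (d q (Suc j) x)) = s q' j (d q' (l - 1) (d q (Suc j) x))"
      using ds_gt[of j l q'] q l2 l y by auto
    also have "d q' (l - 1) (d q (Suc j) x) = d q' (Suc j) (d q l x)"
      using dd[of "Suc j" l q' x] q l2 l x by auto
    also have "\<dots> = \<one>\<^bsub>G q'\<^esub>" using h l2 l d_one q by auto
    finally have "d q l (s q j (d q (Suc j) x)) = \<one>\<^bsub>G q\<^esub>" using s_one q j l2 l by auto
    then show ?thesis unfolding e_def using j x y l h l2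
      by (simp add: d_mult d_inv s_car group.inv_closed[OF gp] monoid.inv_one[OF mn] monoid.r_one[OF mn] d_car)
  qed
qed


fun Pp :: "nat \<Rightarrow> nat \<Rightarrow> 'a \<Rightarrow> 'a" where
  "Pp q 0 x = x"
| "Pp q (Suc j) x = Pp q j (e q j x)"
declare Pp.simps[simp del]

lemma Pp_hom: "j \<le> Suc q \<Longrightarrow> Pp q j \<in> hom (G (Suc q)) (G (Suc q))"
proof (induction j)
  case 0
  have "Pp q 0 = (\<lambda>x. x)" by (rule ext) (simp add: Pp.simps)
  then show ?case by (simp add: hom_def)
next
  case (Suc j)
  have "Pp q (Suc j) = (\<lambda>x. Pp q j (e q j x))" by (rule ext) (simp add: Pp.simps)
  moreover have "(\<lambda>x. Pp q j (e q j x)) \<in> hom (G (Suc q)) (G (Suc q))"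
    by (rule hom_comp'[OF e_hom Suc.IH]) (use Suc.prems in auto)
  ultimately show ?case by simp
qed

lemma Pp_car: "j \<le> Suc q \<Longrightarrow> x \<in> carrier (G (Suc q)) \<Longrightarrow> Pp q j x \<in> carrier (G (Suc q))"
  by (rule hom_car'[OF Pp_hom])

lemma Pp_N: "j \<le> Suc q \<Longrightarrow> x \<in> carrier (G (Suc q)) \<Longrightarrow>
   (\<forall>l. j < l \<and> l \<le> Suc q \<longrightarrow> d q l x = \<one>\<^bsub>G q\<^esub>) \<Longrightarrow> Pp q j x \<in> N (Suc q)"
proof (induction j arbitrary: x)
  case 0
  then show ?case by (auto simp: NS Pp.simps)
next
  case (Suc j)
  have "Pp q j (e q j x) \<in> N (Suc q)"
    by (rule Suc.IH) (use Suc.prems e_car e_pres in auto)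
  then show ?case by (simp add: Pp.simps)
qed

lemma Pp_id: "x \<in> N (Suc q) \<Longrightarrow> j \<le> Suc q \<Longrightarrow> Pp q j x = x"
  by (induction j) (auto simp: e_N Pp.simps)

definition pi :: "nat \<Rightarrow> 'a \<Rightarrow> 'a" where
  "pi n x = (case n of 0 \<Rightarrow> x | Suc q \<Rightarrow> Pp q (Suc q) x)"

lemma pi_hom: "pi n \<in> hom (G n) (G n)"
proof (cases n)
  case 0
  have "pi 0 = (\<lambda>x. x)" by (rule ext) (simp add: pi_def)
  then show ?thesis using 0 by (simp add: hom_def)
next
  case (Suc q)
  have "pi (Suc q) = Pp q (Suc q)" by (rule ext) (simp add: pi_def)
  then show ?thesis using Suc Pp_hom by simp
qed

lemma pi_car: "x \<in> carrier (G n) \<Longrightarrow> pi n x \<in> carrier (G n)"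
  by (rule hom_car'[OF pi_hom])

lemma pi_N: "x \<in> carrier (G n) \<Longrightarrow> pi n x \<in> N n"
  by (cases n) (auto simp: pi_def N0 intro!: Pp_N)

lemma pi_id: "x \<in> N n \<Longrightarrow> pi n x = x"
  by (cases n) (auto simp: pi_def Pp_id)

end

locale shom = G: sab G dG sG + H: sab H dH sH
  for G :: "nat \<Rightarrow> ('a, 'm1) monoid_scheme" and dG sG
  and H :: "nat \<Rightarrow> ('b, 'm2) monoid_scheme" and dH sH +
  fixes h :: "nat \<Rightarrow> 'a \<Rightarrow> 'b"
  assumes sh: "simplicial_hom G dG sG H dH sH h"
begin

lemma h_hom: "h q \<in> hom (G q) (H q)" using sh unfolding simplicial_hom_def by simp
lemma h_d: "i \<le> Suc q \<Longrightarrow> x \<in> carrier (G (Suc q)) \<Longrightarrow> h q (dG q i x) = dH q i (h (Suc q) x)"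
  using sh unfolding simplicial_hom_def by simp
lemma h_s: "i \<le> q \<Longrightarrow> x \<in> carrier (G q) \<Longrightarrow> h (Suc q) (sG q i x) = sH q i (h q x)"
  using sh unfolding simplicial_hom_def by simp
lemma h_car: "x \<in> carrier (G q) \<Longrightarrow> h q x \<in> carrier (H q)" by (rule hom_car'[OF h_hom])
lemma h_mult: "x \<in> carrier (G q) \<Longrightarrow> y \<in> carrier (G q) \<Longrightarrow> h q (x \<otimes>\<^bsub>G q\<^esub> y) = h q x \<otimes>\<^bsub>H q\<^esub> h q y"
  by (rule hom_mult'[OF h_hom])
lemma h_one: "h q \<one>\<^bsub>G q\<^esub> = \<one>\<^bsub>H q\<^esub>" by (rule hom_one'[OF G.gp H.gp h_hom])
lemma h_inv: "x \<in> carrier (G q) \<Longrightarrow> h q (inv\<^bsub>G q\<^esub> x) = inv\<^bsub>H q\<^esub> h q x"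
  by (rule hom_inv'[OF G.gp H.gp h_hom])

lemma h_e: "j \<le> q \<Longrightarrow> x \<in> carrier (G (Suc q)) \<Longrightarrow> h (Suc q) (G.e q j x) = H.e q j (h (Suc q) x)"
  unfolding G.e_def H.e_def
  by (simp add: h_mult h_inv G.s_car G.d_car h_s h_d)

lemma h_Pp: "j \<le> Suc q \<Longrightarrow> x \<in> carrier (G (Suc q)) \<Longrightarrow> h (Suc q) (G.Pp q j x) = H.Pp q j (h (Suc q) x)"
  by (induction j arbitrary: x) (auto simp: h_e G.e_car G.Pp.simps H.Pp.simps)

lemma h_pi: "x \<in> carrier (G n) \<Longrightarrow> h n (G.pi n x) = H.pi n (h n x)"
  by (cases n) (auto simp: G.pi_def H.pi_def h_Pp)

lemma h_N: "x \<in> G.N n \<Longrightarrow> h n x \<in> H.N n"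
  by (cases n) (auto simp: G.NS H.NS G.N0 H.N0 h_car h_d[symmetric] h_one)

end



locale ext2 = D: sab D dD sD + Q: sab Q dQ sQ
  for D :: "nat \<Rightarrow> ('a, 'm1) monoid_scheme" and dD sD
  and Q :: "nat \<Rightarrow> ('b, 'm2) monoid_scheme" and dQ sQ +
  fixes psi :: "nat \<Rightarrow> 'a \<Rightarrow> 'b"
  assumes psi_hom: "psi n \<in> hom (D n) (Q n)"
  and psi_N: "x \<in> D.N n \<Longrightarrow> psi n x \<in> Q.N n"
  and psi_chain: "x \<in> D.N (Suc q) \<Longrightarrow> dQ q 0 (psi (Suc q) x) = psi q (dD q 0 x)"
begin

lemma psi_car: "x \<in> carrier (D n) \<Longrightarrow> psi n x \<in> carrier (Q n)" by (rule hom_car'[OF psi_hom])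

fun R :: "nat \<Rightarrow> ('a \<Rightarrow> 'b) \<Rightarrow> nat \<Rightarrow> 'a \<Rightarrow> 'b" where
  "R q tp 0 x = psi (Suc q) x"
| "R q tp (Suc j) x = R q tp j (D.e q j x) \<otimes>\<^bsub>Q (Suc q)\<^esub> sQ q j (tp (dD q (Suc j) x))"
declare R.simps[simp del]

fun tt :: "nat \<Rightarrow> 'a \<Rightarrow> 'b" where
  "tt 0 = psi 0"
| "tt (Suc q) = R q (tt q) (Suc q)"

context
  fixes q :: nat and tp :: "'a \<Rightarrow> 'b"
  assumes tp_hom: "tp \<in> hom (D q) (Q q)"
  and tp_N: "\<And>x. x \<in> D.N q \<Longrightarrow> tp x = psi q x"
  and tp_d: "\<And>q' i x. q = Suc q' \<Longrightarrow> i \<le> q \<Longrightarrow> x \<in> carrier (D q) \<Longrightarrow> tt q' (dD q' i x) = dQ q' i (tp x)"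
  and tp_s: "\<And>q' i y. q = Suc q' \<Longrightarrow> i \<le> q' \<Longrightarrow> y \<in> carrier (D q') \<Longrightarrow> tp (sD q' i y) = sQ q' i (tt q' y)"
begin

lemma tp_car: "x \<in> carrier (D q) \<Longrightarrow> tp x \<in> carrier (Q q)" by (rule hom_car'[OF tp_hom])
lemma tp_mult: "x \<in> carrier (D q) \<Longrightarrow> y \<in> carrier (D q) \<Longrightarrow> tp (x \<otimes>\<^bsub>D q\<^esub> y) = tp x \<otimes>\<^bsub>Q q\<^esub> tp y"
  by (rule hom_mult'[OF tp_hom])
lemma tp_one: "tp \<one>\<^bsub>D q\<^esub> = \<one>\<^bsub>Q q\<^esub>" by (rule hom_one'[OF D.gp Q.gp tp_hom])

lemma R_hom: "j \<le> Suc q \<Longrightarrow> R q tp j \<in> hom (D (Suc q)) (Q (Suc q))"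
proof (induction j)
  case 0
  have "R q tp 0 = psi (Suc q)" by (rule ext) (simp add: R.simps)
  then show ?case using psi_hom by simp
next
  case (Suc j)
  have eq: "R q tp (Suc j) = (\<lambda>x. R q tp j (D.e q j x) \<otimes>\<^bsub>Q (Suc q)\<^esub> sQ q j (tp (dD q (Suc j) x)))"
    by (rule ext) (simp add: R.simps)
  have h1: "(\<lambda>x. R q tp j (D.e q j x)) \<in> hom (D (Suc q)) (Q (Suc q))"
    by (rule hom_comp'[OF D.e_hom Suc.IH]) (use Suc.prems in auto)
  have h2: "(\<lambda>x. tp (dD q (Suc j) x)) \<in> hom (D (Suc q)) (Q q)"
    by (rule hom_comp'[OF D.d_hom tp_hom]) (use Suc.prems in auto)
  have h3: "(\<lambda>x. sQ q j (tp (dD q (Suc j) x))) \<in> hom (D (Suc q)) (Q (Suc q))"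
    by (rule hom_comp'[OF h2 Q.s_hom]) (use Suc.prems in auto)
  show ?case unfolding eq by (rule hom_prod[OF Q.cg h1 h3])
qed

lemma R_car: "j \<le> Suc q \<Longrightarrow> x \<in> carrier (D (Suc q)) \<Longrightarrow> R q tp j x \<in> carrier (Q (Suc q))"
  by (rule hom_car'[OF R_hom])
lemma R_one: "j \<le> Suc q \<Longrightarrow> R q tp j \<one>\<^bsub>D (Suc q)\<^esub> = \<one>\<^bsub>Q (Suc q)\<^esub>"
  by (rule hom_one'[OF D.gp Q.gp R_hom])

lemma R_N: "j \<le> Suc q \<Longrightarrow> x \<in> D.N (Suc q) \<Longrightarrow> R q tp j x = psi (Suc q) x"
proof (induction j)
  case 0 then show ?case by (simp add: R.simps)
next
  case (Suc j)
  have "dD q (Suc j) x = \<one>\<^bsub>D q\<^esub>" using Suc.prems by (auto simp: D.NS)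
  then show ?case using Suc by (simp add: R.simps D.e_N tp_one Q.s_one psi_car D.N_car)
qed

lemma L: "j \<le> q \<Longrightarrow> i \<le> Suc q \<Longrightarrow> y \<in> carrier (D q) \<Longrightarrow>
   dQ q i (sQ q j (tp y)) = tp (dD q i (sD q j y))"
proof -
  assume j: "j \<le> q" and i: "i \<le> Suc q" and y: "y \<in> carrier (D q)"
  consider "i = j" | "i = Suc j" | "i < j" | "Suc j < i" by linarith
  then show ?thesis
  proof cases
    case 1 then show ?thesis using j y by (simp add: Q.ds_eq D.ds_eq tp_car)
  next
    case 2 then show ?thesis using j y by (simp add: Q.ds_eq2 D.ds_eq2 tp_car)
  next
    case 3
    then obtain q' where q: "q = Suc q'" using j by (cases q) auto
    have "dQ q i (sQ q j (tp y)) = sQ q' (j - 1) (dQ q' i (tp y))"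
      using Q.ds_lt[of i j q' "tp y"] 3 j q y tp_car by auto
    also have "dQ q' i (tp y) = tt q' (dD q' i y)" using tp_d[of q' i y] q 3 j y by auto
    also have "sQ q' (j - 1) (tt q' (dD q' i y)) = tp (sD q' (j - 1) (dD q' i y))"
      using tp_s[of q' "j - 1" "dD q' i y"] q 3 j y D.d_car[of i q' y] by auto
    also have "sD q' (j - 1) (dD q' i y) = dD q i (sD q j y)"
      using D.ds_lt[of i j q' y] 3 j q y by auto
    finally show ?thesis .
  next
    case 4
    then obtain q' where q: "q = Suc q'" using i by (cases q) auto
    have "dQ q i (sQ q j (tp y)) = sQ q' j (dQ q' (i - 1) (tp y))"
      using Q.ds_gt[of j i q' "tp y"] 4 i q y tp_car by auto
    also have "dQ q' (i - 1) (tp y) = tt q' (dD q' (i - 1) y)" using tp_d[of q' "i - 1" y] q 4 i y by auto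
    also have "sQ q' j (tt q' (dD q' (i - 1) y)) = tp (sD q' j (dD q' (i - 1) y))"
      using tp_s[of q' j "dD q' (i - 1) y"] q 4 i j y D.d_car[of "i - 1" q' y] by auto
    also have "sD q' j (dD q' (i - 1) y) = dD q i (sD q j y)"
      using D.ds_gt[of j i q' y] 4 i q y by auto
    finally show ?thesis .
  qed
qed

lemma R_face: "j \<le> Suc q \<Longrightarrow> x \<in> carrier (D (Suc q)) \<Longrightarrow>
   (\<forall>l. j < l \<and> l \<le> Suc q \<longrightarrow> dD q l x = \<one>\<^bsub>D q\<^esub>) \<Longrightarrow> i \<le> Suc q \<Longrightarrow>
   dQ q i (R q tp j x) = tp (dD q i x)"
proof (induction j arbitrary: x)
  case 0
  then have xN: "x \<in> D.N (Suc q)" by (auto simp: D.NS)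
  show ?case
  proof (cases "i = 0")
    case True
    then show ?thesis using xN psi_chain tp_N D.N_d0 by (simp add: R.simps)
  next
    case False
    have "psi (Suc q) x \<in> Q.N (Suc q)" using psi_N xN by blast
    then have "dQ q i (psi (Suc q) x) = \<one>\<^bsub>Q q\<^esub>" using False 0 by (auto simp: Q.NS)
    moreover have "dD q i x = \<one>\<^bsub>D q\<^esub>" using xN False 0 by (auto simp: D.NS)
    ultimately show ?thesis by (simp add: R.simps tp_one)
  qed
next
  case (Suc j)
  define y where "y = dD q (Suc j) x"
  have j: "j \<le> q" using Suc.prems by auto
  have y: "y \<in> carrier (D q)" unfolding y_def using Suc.prems by (auto intro: D.d_car)
  have ex: "D.e q j x \<in> carrier (D (Suc q))" using D.e_car j Suc.prems by auto
  have sy: "sD q j y \<in> carrier (D (Suc q))" using D.s_car j y by auto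
  have "dQ q i (R q tp (Suc j) x) = dQ q i (R q tp j (D.e q j x)) \<otimes>\<^bsub>Q q\<^esub> dQ q i (sQ q j (tp y))"
    unfolding y_def[symmetric] R.simps(2)
    by (rule Q.d_mult) (use Suc.prems j ex y in \<open>auto intro: R_car Q.s_car tp_car\<close>)
  also have "dQ q i (R q tp j (D.e q j x)) = tp (dD q i (D.e q j x))"
    by (rule Suc.IH) (use Suc.prems j ex D.e_pres in auto)
  also have "dQ q i (sQ q j (tp y)) = tp (dD q i (sD q j y))"
    by (rule L) (use Suc.prems j y in auto)
  also have "tp (dD q i (D.e q j x)) \<otimes>\<^bsub>Q q\<^esub> tp (dD q i (sD q j y)) = tp (dD q i (D.e q j x) \<otimes>\<^bsub>D q\<^esub> dD q i (sD q j y))"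
    by (rule tp_mult[symmetric]) (use Suc.prems ex sy in \<open>auto intro: D.d_car\<close>)
  also have "dD q i (D.e q j x) \<otimes>\<^bsub>D q\<^esub> dD q i (sD q j y) = dD q i (D.e q j x \<otimes>\<^bsub>D (Suc q)\<^esub> sD q j y)"
    by (rule D.d_mult[symmetric]) (use Suc.prems ex sy in auto)
  also have "D.e q j x \<otimes>\<^bsub>D (Suc q)\<^esub> sD q j y = x"
    unfolding y_def by (rule D.e_decomp) (use j Suc.prems in auto)
  finally show ?case .
qed

lemma R_degen: "k \<le> q \<Longrightarrow> Suc k \<le> j \<Longrightarrow> j \<le> Suc q \<Longrightarrow> y \<in> carrier (D q) \<Longrightarrow>
   R q tp j (sD q k y) = sQ q k (tp y)"
proof (induction j arbitrary: y)
  case 0 then show ?case by simp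
next
  case (Suc j)
  show ?case
  proof (cases "j = k")
    case True
    have sk: "sD q k y \<in> carrier (D (Suc q))" using Suc.prems D.s_car by auto
    have "D.e q k (sD q k y) = \<one>\<^bsub>D (Suc q)\<^esub>"
      unfolding D.e_def using Suc.prems sk by (simp add: D.ds_eq2)
    then show ?thesis using True Suc.prems
      by (simp add: R.simps R_one D.ds_eq2 Q.s_car tp_car)
  next
    case False
    then have kj: "k < j" "j \<le> q" using Suc.prems by auto
    then obtain q'' where q: "q = Suc q''" by (cases q) auto
    define z where "z = dD q'' j y"
    have jq: "j \<le> Suc q''" "j - 1 \<le> q''" "k \<le> q''" using kj q by auto
    have y: "y \<in> carrier (D (Suc q''))" using Suc.prems q by simp
    have z: "z \<in> carrier (D q'')" unfolding z_def using D.d_car jq y by auto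
    have dsk: "dD q (Suc j) (sD q k y) = sD q'' k z"
      unfolding z_def using D.ds_gt[of k "Suc j" q'' y] kj q y by auto
    have ss: "sD q j (sD q'' k z) = sD q k (sD q'' (j - 1) z)"
      using D.ss[of k "j - 1" q'' z] kj q z by auto
    have ey: "D.e q'' (j - 1) y = y \<otimes>\<^bsub>D q\<^esub> inv\<^bsub>D q\<^esub> (sD q'' (j - 1) z)"
      unfolding D.e_def z_def using kj q by simp
    have eyc: "D.e q'' (j - 1) y \<in> carrier (D q)" using D.e_car jq y q by simp
    have szc: "sD q'' (j - 1) z \<in> carrier (D q)" using D.s_car jq z q by simp
    have e1: "D.e q j (sD q k y) = sD q k (D.e q'' (j - 1) y)"
      unfolding D.e_def[of q j] dsk ss ey
      using Suc.prems y szc q by (simp add: D.s_mult D.s_inv)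
    have "R q tp (Suc j) (sD q k y) = R q tp j (sD q k (D.e q'' (j - 1) y)) \<otimes>\<^bsub>Q (Suc q)\<^esub> sQ q j (tp (sD q'' k z))"
      by (simp add: R.simps e1 dsk)
    also have "R q tp j (sD q k (D.e q'' (j - 1) y)) = sQ q k (tp (D.e q'' (j - 1) y))"
      by (rule Suc.IH) (use Suc.prems kj eyc in auto)
    also have "tp (sD q'' k z) = sQ q'' k (dQ q'' j (tp y))"
      using tp_s[of q'' k z] tp_d[of q'' j y] q jq z y unfolding z_def by auto
    also have "sQ q j (sQ q'' k (dQ q'' j (tp y))) = sQ q k (sQ q'' (j - 1) (dQ q'' j (tp y)))"
      using Q.ss[of k "j - 1" q'' "dQ q'' j (tp y)"] kj q jq tp_car y Q.d_car by auto
    also have "sQ q'' (j - 1) (dQ q'' j (tp y)) = tp (sD q'' (j - 1) z)"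
      using tp_s[of q'' "j - 1" z] tp_d[of q'' j y] q jq z y unfolding z_def by auto
    also have "sQ q k (tp (D.e q'' (j - 1) y)) \<otimes>\<^bsub>Q (Suc q)\<^esub> sQ q k (tp (sD q'' (j - 1) z))
        = sQ q k (tp (D.e q'' (j - 1) y \<otimes>\<^bsub>D q\<^esub> sD q'' (j - 1) z))"
      using Suc.prems eyc szc by (simp add: Q.s_mult[symmetric] tp_car tp_mult)
    also have "D.e q'' (j - 1) y \<otimes>\<^bsub>D q\<^esub> sD q'' (j - 1) z = y"
      using D.e_decomp[of "j - 1" q'' y] jq y q kj unfolding z_def by simp
    finally show ?thesis .
  qed
qed

end

lemma tt_all: "tt q \<in> hom (D q) (Q q) \<and> (\<forall>x\<in>D.N q. tt q x = psi q x) \<and>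
  (\<forall>q' i x. q = Suc q' \<longrightarrow> i \<le> q \<longrightarrow> x \<in> carrier (D q) \<longrightarrow> tt q' (dD q' i x) = dQ q' i (tt q x)) \<and>
  (\<forall>q' i y. q = Suc q' \<longrightarrow> i \<le> q' \<longrightarrow> y \<in> carrier (D q') \<longrightarrow> tt q (sD q' i y) = sQ q' i (tt q' y))"
proof (induction q)
  case 0 then show ?case using psi_hom by simp
next
  case (Suc q)
  have h1: "tt q \<in> hom (D q) (Q q)" using Suc.IH by simp
  have h2: "\<And>x. x \<in> D.N q \<Longrightarrow> tt q x = psi q x" using Suc.IH by simp
  have h3: "\<And>q' i x. q = Suc q' \<Longrightarrow> i \<le> q \<Longrightarrow> x \<in> carrier (D q) \<Longrightarrow> tt q' (dD q' i x) = dQ q' i (tt q x)"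
    using Suc.IH by simp
  have h4: "\<And>q' i y. q = Suc q' \<Longrightarrow> i \<le> q' \<Longrightarrow> y \<in> carrier (D q') \<Longrightarrow> tt q (sD q' i y) = sQ q' i (tt q' y)"
    using Suc.IH by simp
  have "tt (Suc q) \<in> hom (D (Suc q)) (Q (Suc q))"
    using R_hom[OF h1 h2 h3 h4, of "Suc q"] by simp
  moreover have "\<forall>x\<in>D.N (Suc q). tt (Suc q) x = psi (Suc q) x"
    using R_N[OF h1 h2 h3 h4, of "Suc q"] by simp
  moreover have "\<forall>i x. i \<le> Suc q \<longrightarrow> x \<in> carrier (D (Suc q)) \<longrightarrow> tt q (dD q i x) = dQ q i (tt (Suc q) x)"
  proof (intro allI impI)
    fix i x assume "i \<le> Suc q" "x \<in> carrier (D (Suc q))"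
    then show "tt q (dD q i x) = dQ q i (tt (Suc q) x)"
      using R_face[OF h1 h2 h3 h4, of "Suc q" x i] by (simp add: not_le[symmetric])
  qed
  moreover have "\<forall>i y. i \<le> q \<longrightarrow> y \<in> carrier (D q) \<longrightarrow> tt (Suc q) (sD q i y) = sQ q i (tt q y)"
    using R_degen[OF h1 h2 h3 h4, of _ "Suc q"] by simp
  ultimately show ?case by simp
qed

lemma tt_simp: "simplicial_hom D dD sD Q dQ sQ tt"
  unfolding simplicial_hom_def using tt_all by blast

lemma tt_N: "x \<in> D.N n \<Longrightarrow> tt n x = psi n x" using tt_all by blast

lemma tt_car: "x \<in> carrier (D n) \<Longrightarrow> tt n x \<in> carrier (Q n)"
  using tt_all hom_car' by metis

lemma tt_f:
  fixes P :: "nat \<Rightarrow> ('c, 'm3) monoid_scheme" and dP sP :: "nat \<Rightarrow> nat \<Rightarrow> 'c \<Rightarrow> 'c"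
    and f :: "nat \<Rightarrow> 'b \<Rightarrow> 'c" and s :: "nat \<Rightarrow> 'a \<Rightarrow> 'c" and m :: nat
  assumes sP: "sab P dP sP" and fh: "simplicial_hom Q dQ sQ P dP sP f" and sh: "simplicial_hom D dD sD P dP sP s"
  and fpsi: "\<And>n x. n \<le> m \<Longrightarrow> x \<in> D.N n \<Longrightarrow> f n (psi n x) = s n x"
  shows "n \<le> m \<Longrightarrow> x \<in> carrier (D n) \<Longrightarrow> f n (tt n x) = s n x"
proof (induction n arbitrary: x)
  interpret F: shom Q dQ sQ P dP sP f using sP fh Q.sab_axioms by (simp add: shom_def shom_axioms_def)
  interpret S: shom D dD sD P dP sP s using sP sh D.sab_axioms by (simp add: shom_def shom_axioms_def)
  {
  case 0 then show ?case using fpsi by (simp add: D.N0)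
  next
  case (Suc q)
  have h1: "tt q \<in> hom (D q) (Q q)" using tt_all by simp
  have h2: "\<And>x. x \<in> D.N q \<Longrightarrow> tt q x = psi q x" using tt_all by simp
  have h3: "\<And>q' i x. q = Suc q' \<Longrightarrow> i \<le> q \<Longrightarrow> x \<in> carrier (D q) \<Longrightarrow> tt q' (dD q' i x) = dQ q' i (tt q x)"
    using tt_all by simp
  have h4: "\<And>q' i y. q = Suc q' \<Longrightarrow> i \<le> q' \<Longrightarrow> y \<in> carrier (D q') \<Longrightarrow> tt q (sD q' i y) = sQ q' i (tt q' y)"
    using tt_all by simp
  have IHq: "\<And>y. y \<in> carrier (D q) \<Longrightarrow> f q (tt q y) = s q y" using Suc by simp
  have claim: "j \<le> Suc q \<Longrightarrow> x \<in> carrier (D (Suc q)) \<Longrightarrow>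
    (\<forall>l. j < l \<and> l \<le> Suc q \<longrightarrow> dD q l x = \<one>\<^bsub>D q\<^esub>) \<Longrightarrow> f (Suc q) (R q (tt q) j x) = s (Suc q) x" for j x
  proof (induction j arbitrary: x)
    case 0
    then have "x \<in> D.N (Suc q)" by (auto simp: D.NS)
    then show ?case using fpsi Suc.prems by (simp add: R.simps)
  next
    case (Suc j)
    define y where "y = dD q (Suc j) x"
    have j: "j \<le> q" using Suc.prems by auto
    have y: "y \<in> carrier (D q)" unfolding y_def using Suc.prems by (auto intro: D.d_car)
    have ex: "D.e q j x \<in> carrier (D (Suc q))" using D.e_car j Suc.prems by auto
    have sy: "sD q j y \<in> carrier (D (Suc q))" using D.s_car j y by auto
    have "f (Suc q) (R q (tt q) (Suc j) x) = f (Suc q) (R q (tt q) j (D.e q j x)) \<otimes>\<^bsub>P (Suc q)\<^esub> f (Suc q) (sQ q j (tt q y))"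
      unfolding y_def[symmetric] R.simps(2)
      by (rule F.h_mult) (use Suc.prems j ex y in \<open>auto intro: R_car[OF h1 h2 h3 h4] Q.s_car tt_car\<close>)
    also have "f (Suc q) (R q (tt q) j (D.e q j x)) = s (Suc q) (D.e q j x)"
      by (rule Suc.IH) (use Suc.prems j ex D.e_pres in auto)
    also have "f (Suc q) (sQ q j (tt q y)) = s (Suc q) (sD q j y)"
      using F.h_s[of j q "tt q y"] S.h_s[of j q y] IHq[OF y] j y tt_car by simp
    also have "s (Suc q) (D.e q j x) \<otimes>\<^bsub>P (Suc q)\<^esub> s (Suc q) (sD q j y) = s (Suc q) (D.e q j x \<otimes>\<^bsub>D (Suc q)\<^esub> sD q j y)"
      by (rule S.h_mult[symmetric]) (use ex sy in auto)
    also have "D.e q j x \<otimes>\<^bsub>D (Suc q)\<^esub> sD q j y = x"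
      unfolding y_def by (rule D.e_decomp) (use j Suc.prems in auto)
    finally show ?case .
  qed
  show ?case using claim[of "Suc q" x] Suc.prems by (simp add: not_le[symmetric])
  }
qed

end


lemma free_lift:
  assumes iso: "G \<cong> free_Abelian_group B" and G: "group G" and X: "comm_group X" and Y: "group Y"
  and h: "h \<in> hom X Y" and A: "subgroup A X" and u: "u \<in> hom G Y" and img: "u ` carrier G \<subseteq> h ` A"
  shows "\<exists>v \<in> hom G X. \<forall>x\<in>carrier G. v x \<in> A \<and> h (v x) = u x"
proof -
  let ?F = "free_Abelian_group B"
  obtain \<phi> where phi: "\<phi> \<in> iso G ?F" using iso unfolding is_iso_def by blast
  define \<psi> where "\<psi> = inv_into (carrier G) \<phi>"
  have psi: "\<psi> \<in> iso ?F G" unfolding \<psi>_def by (rule group.iso_set_sym[OF G phi])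
  have psih: "\<psi> \<in> hom ?F G" using psi by (simp add: iso_def)
  have phih: "\<phi> \<in> hom G ?F" using phi by (simp add: iso_def)
  have Fg: "group ?F" by simp
  interpret X: comm_group X by (rule X)
  interpret Y: group Y by (rule Y)
  interpret A: subgroup A X by (rule A)
  define c where "c = (\<lambda>b. SOME a. a \<in> A \<and> h a = u (\<psi> (frag_of b)))"
  have c: "c b \<in> A \<and> h (c b) = u (\<psi> (frag_of b))" if "b \<in> B" for b
  proof -
    have "\<psi> (frag_of b) \<in> carrier G" using hom_car'[OF psih] that by simp
    then have "u (\<psi> (frag_of b)) \<in> h ` A" using img by blast
    then obtain a where "a \<in> A" "h a = u (\<psi> (frag_of b))" by auto
    then show ?thesis unfolding c_def by (metis (mono_tags, lifting) someI_ex)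
  qed
  have cB: "c ` B \<subseteq> carrier X" using c A.subset by blast
  obtain w where w: "w \<in> hom ?F X" "\<And>b. b \<in> B \<Longrightarrow> w (frag_of b) = c b"
    using X.free_Abelian_group_universal[OF cB] by metis
  have claim: "w z \<in> A \<and> h (w z) = u (\<psi> z)" if "z \<in> carrier ?F" for z
  proof -
    have kz: "Poly_Mapping.keys z \<subseteq> B" using that by simp
    show ?thesis
    proof (rule free_Abelian_group_induct[OF kz])
      have "w 0 = \<one>\<^bsub>X\<^esub>" using hom_one'[OF Fg X.is_group w(1)] by simp
      moreover have "\<psi> 0 = \<one>\<^bsub>G\<^esub>" using hom_one'[OF Fg G psih] by simp
      ultimately show "w 0 \<in> A \<and> h (w 0) = u (\<psi> 0)" using hom_one'[OF X.is_group Y h] hom_one'[OF G Y u] by simp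
    next
      fix x y :: "'c \<Rightarrow>\<^sub>0 int"
      assume "Poly_Mapping.keys x \<subseteq> B" "Poly_Mapping.keys y \<subseteq> B" "w x \<in> A \<and> h (w x) = u (\<psi> x)" "w y \<in> A \<and> h (w y) = u (\<psi> y)"
      note 2 = this
      have xc: "x \<in> carrier ?F" "y \<in> carrier ?F" using 2 by auto
      have eq: "x - y = x \<otimes>\<^bsub>?F\<^esub> inv\<^bsub>?F\<^esub> y" using 2 by simp
      have icy: "inv\<^bsub>?F\<^esub> y \<in> carrier ?F" using group.inv_closed[OF Fg xc(2)] .
      have wx: "w x \<in> carrier X" "w y \<in> carrier X" using hom_car'[OF w(1)] xc by auto
      have wxy: "w (x - y) = w x \<otimes>\<^bsub>X\<^esub> inv\<^bsub>X\<^esub> w y"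
        unfolding eq using hom_mult'[OF w(1) xc(1) icy] hom_inv'[OF Fg X.is_group w(1) xc(2)] by simp
      have px: "\<psi> x \<in> carrier G" "\<psi> y \<in> carrier G" using hom_car'[OF psih] xc by auto
      have pxy: "\<psi> (x - y) = \<psi> x \<otimes>\<^bsub>G\<^esub> inv\<^bsub>G\<^esub> \<psi> y"
        unfolding eq using hom_mult'[OF psih xc(1) icy] hom_inv'[OF Fg G psih xc(2)] by simp
      have "h (w (x - y)) = h (w x) \<otimes>\<^bsub>Y\<^esub> inv\<^bsub>Y\<^esub> h (w y)"
        unfolding wxy using hom_mult'[OF h] hom_inv'[OF X.is_group Y h] wx by simp
      also have "\<dots> = u (\<psi> x) \<otimes>\<^bsub>Y\<^esub> inv\<^bsub>Y\<^esub> u (\<psi> y)" using 2 by simp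
      also have "\<dots> = u (\<psi> (x - y))"
        unfolding pxy using hom_mult'[OF u] hom_inv'[OF G Y u] px group.inv_closed[OF G] by simp
      finally show "w (x - y) \<in> A \<and> h (w (x - y)) = u (\<psi> (x - y))" using 2 wxy A.m_inv_closed A.m_closed by simp
    next
      fix a assume "a \<in> B"
      then show "w (frag_of a) \<in> A \<and> h (w (frag_of a)) = u (\<psi> (frag_of a))" using w(2) c by simp
    qed
  qed
  define v where "v = (\<lambda>x. w (\<phi> x))"
  have vh: "v \<in> hom G X" unfolding v_def by (rule hom_comp'[OF phih w(1)])
  have inj: "inj_on \<phi> (carrier G)" using phi by (simp add: iso_def bij_betw_def)
  have "\<forall>x\<in>carrier G. v x \<in> A \<and> h (v x) = u x"
  proof
    fix x assume x: "x \<in> carrier G"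
    have "\<phi> x \<in> carrier ?F" using hom_car'[OF phih x] .
    moreover have "\<psi> (\<phi> x) = x" unfolding \<psi>_def using inv_into_f_f[OF inj x] .
    ultimately show "v x \<in> A \<and> h (v x) = u x" unfolding v_def using claim by metis
  qed
  then show ?thesis using vh by blast
qed



context sab begin
lemma N_subgroup: "subgroup (N n) (G n)"
  by (auto simp: subgroup_def N_car N_mult N_one N_inv)
end

locale mainloc = D: sab D dD sD + Q: sab Q dQ sQ + P: sab P dP sP
  for D :: "nat \<Rightarrow> ('a, 'm1) monoid_scheme" and dD sD
  and Q :: "nat \<Rightarrow> ('b, 'm2) monoid_scheme" and dQ sQ
  and P :: "nat \<Rightarrow> ('c, 'm3) monoid_scheme" and dP sP +
  fixes s :: "nat \<Rightarrow> 'a \<Rightarrow> 'c" and f :: "nat \<Rightarrow> 'b \<Rightarrow> 'c" and m :: nat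
  assumes sh: "simplicial_hom D dD sD P dP sP s" and fh: "simplicial_hom Q dQ sQ P dP sP f"
  and free: "free_simplicial D" and conn: "m_connected m D dD"
  and surj: "\<forall>q. f q ` carrier (Q q) = carrier (P q)"
begin

sublocale S: shom D dD sD P dP sP s
  using sh by (simp add: shom_def shom_axioms_def D.sab_axioms P.sab_axioms)
sublocale F: shom Q dQ sQ P dP sP f
  using fh by (simp add: shom_def shom_axioms_def Q.sab_axioms P.sab_axioms)

lemma Nf_surj: "p \<in> P.N n \<Longrightarrow> \<exists>y\<in>Q.N n. f n y = p"
proof -
  assume p: "p \<in> P.N n"
  then have "p \<in> carrier (P n)" by (rule P.N_car)
  then have "p \<in> f n ` carrier (Q n)" using surj by simp
  then obtain y0 where y0: "y0 \<in> carrier (Q n)" "f n y0 = p" by blast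
  have "f n (Q.pi n y0) = P.pi n p" using F.h_pi[OF y0(1)] y0(2) by simp
  also have "\<dots> = p" using P.pi_id[OF p] .
  finally show ?thesis using Q.pi_N[OF y0(1)] by blast
qed

definition Z :: "nat \<Rightarrow> 'a set" where
  "Z k = {y \<in> D.N k. \<forall>q. k = Suc q \<longrightarrow> dD q 0 y = \<one>\<^bsub>D q\<^esub>}"

lemma Z_N: "z \<in> Z k \<Longrightarrow> z \<in> D.N k" by (simp add: Z_def)

lemma conn_Z: "k \<le> m \<Longrightarrow> z \<in> Z k \<Longrightarrow> \<exists>x\<in>D.N (Suc k). dD k 0 x = z"
  using conn unfolding m_connected_def Z_def by (cases k) auto

lemma d0_Z: "x \<in> D.N (Suc k) \<Longrightarrow> dD k 0 x \<in> Z k"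
  unfolding Z_def using D.N_d0 D.N_dd0 by (cases k) auto

definition good_rho :: "nat \<Rightarrow> ('a \<Rightarrow> 'a) \<Rightarrow> bool" where
  "good_rho k r \<longleftrightarrow> r \<in> hom (D k) (D k) \<and> (\<forall>x\<in>carrier (D k). r x \<in> Z k) \<and> (\<forall>z\<in>Z k. r z = z)"

definition good_lam :: "nat \<Rightarrow> ('a \<Rightarrow> 'a) \<Rightarrow> ('a \<Rightarrow> 'a) \<Rightarrow> bool" where
  "good_lam k r l \<longleftrightarrow> l \<in> hom (D k) (D (Suc k)) \<and>
     (\<forall>x\<in>carrier (D k). l x \<in> D.N (Suc k) \<and> dD k 0 (l x) = r x)"

fun rho_of :: "nat \<Rightarrow> ('a \<Rightarrow> 'a) \<Rightarrow> 'a \<Rightarrow> 'a" where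
  "rho_of 0 l x = x"
| "rho_of (Suc k) l x = D.pi (Suc k) x \<otimes>\<^bsub>D (Suc k)\<^esub> inv\<^bsub>D (Suc k)\<^esub> (l (dD k 0 (D.pi (Suc k) x)))"

primrec lam :: "nat \<Rightarrow> 'a \<Rightarrow> 'a" where
  "lam 0 = (\<lambda>x. x)"
| "lam (Suc k) = (SOME l. good_lam k (rho_of k (lam k)) l)"

definition rho :: "nat \<Rightarrow> 'a \<Rightarrow> 'a" where "rho k = rho_of k (lam k)"

lemma exists_lam: "k \<le> m \<Longrightarrow> good_rho k r \<Longrightarrow> \<exists>l. good_lam k r l"
proof -
  assume k: "k \<le> m" and r: "good_rho k r"
  obtain B :: "'a set" where iso: "D k \<cong> free_Abelian_group B" using free unfolding free_simplicial_def by blast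
  have img: "r ` carrier (D k) \<subseteq> dD k 0 ` D.N (Suc k)"
  proof
    fix y assume "y \<in> r ` carrier (D k)"
    then obtain x where "x \<in> carrier (D k)" "y = r x" by blast
    then have "y \<in> Z k" using r unfolding good_rho_def by blast
    then show "y \<in> dD k 0 ` D.N (Suc k)" using conn_Z[OF k] by blast
  qed
  have rh: "r \<in> hom (D k) (D k)" using r unfolding good_rho_def by blast
  obtain v where "v \<in> hom (D k) (D (Suc k))" "\<forall>x\<in>carrier (D k). v x \<in> D.N (Suc k) \<and> dD k 0 (v x) = r x"
    using free_lift[OF iso D.gp D.cg D.gp D.d_hom D.N_subgroup rh img] by auto
  then show ?thesis unfolding good_lam_def by blast
qed

lemma rho0: "good_rho 0 (rho_of 0 l)"
  unfolding good_rho_def Z_def by (simp add: hom_def D.N0)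

lemma rho_step: "good_rho k r \<Longrightarrow> good_lam k r l \<Longrightarrow> good_rho (Suc k) (rho_of (Suc k) l)"
proof -
  assume r: "good_rho k r" and l: "good_lam k r l"
  have lh: "l \<in> hom (D k) (D (Suc k))" and lN: "\<And>x. x \<in> carrier (D k) \<Longrightarrow> l x \<in> D.N (Suc k)"
    and ld: "\<And>x. x \<in> carrier (D k) \<Longrightarrow> dD k 0 (l x) = r x" using l unfolding good_lam_def by auto
  have rZ: "\<And>z. z \<in> Z k \<Longrightarrow> r z = z" using r unfolding good_rho_def by auto
  have eq: "rho_of (Suc k) l = (\<lambda>x. D.pi (Suc k) x \<otimes>\<^bsub>D (Suc k)\<^esub> inv\<^bsub>D (Suc k)\<^esub> (l (dD k 0 (D.pi (Suc k) x))))"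
    by (rule ext) simp
  have h1: "(\<lambda>x. dD k 0 (D.pi (Suc k) x)) \<in> hom (D (Suc k)) (D k)"
    by (rule hom_comp'[OF D.pi_hom D.d_hom]) simp
  have h2: "(\<lambda>x. l (dD k 0 (D.pi (Suc k) x))) \<in> hom (D (Suc k)) (D (Suc k))"
    by (rule hom_comp'[OF h1 lh])
  have h3: "(\<lambda>x. inv\<^bsub>D (Suc k)\<^esub> (l (dD k 0 (D.pi (Suc k) x)))) \<in> hom (D (Suc k)) (D (Suc k))"
    by (rule hom_invf[OF D.cg D.gp h2])
  have hom: "rho_of (Suc k) l \<in> hom (D (Suc k)) (D (Suc k))"
    unfolding eq by (rule hom_prod[OF D.cg D.pi_hom h3])
  have val: "rho_of (Suc k) l x \<in> Z (Suc k)" if x: "x \<in> carrier (D (Suc k))" for x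
  proof -
    define w where "w = dD k 0 (D.pi (Suc k) x)"
    have piN: "D.pi (Suc k) x \<in> D.N (Suc k)" using D.pi_N[OF x] .
    have wZ: "w \<in> Z k" unfolding w_def by (rule d0_Z[OF piN])
    have wc: "w \<in> carrier (D k)" using Z_N[OF wZ] D.N_car by blast
    have lw: "l w \<in> D.N (Suc k)" using lN[OF wc] .
    have inN: "D.pi (Suc k) x \<otimes>\<^bsub>D (Suc k)\<^esub> inv\<^bsub>D (Suc k)\<^esub> l w \<in> D.N (Suc k)"
      using D.N_mult[OF piN D.N_inv[OF lw]] .
    have "dD k 0 (D.pi (Suc k) x \<otimes>\<^bsub>D (Suc k)\<^esub> inv\<^bsub>D (Suc k)\<^esub> l w) = w \<otimes>\<^bsub>D k\<^esub> inv\<^bsub>D k\<^esub> (r w)"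
      using D.N_car[OF piN] D.N_car[OF lw] by (simp add: D.d_mult D.d_inv ld[OF wc] w_def[symmetric])
    also have "\<dots> = \<one>\<^bsub>D k\<^esub>" using rZ[OF wZ] wc by simp
    finally show ?thesis using inN unfolding Z_def by (simp add: w_def)
  qed
  have idZ: "rho_of (Suc k) l z = z" if z: "z \<in> Z (Suc k)" for z
  proof -
    have zN: "z \<in> D.N (Suc k)" using Z_N[OF z] .
    have "dD k 0 z = \<one>\<^bsub>D k\<^esub>" using z unfolding Z_def by simp
    moreover have "l \<one>\<^bsub>D k\<^esub> = \<one>\<^bsub>D (Suc k)\<^esub>" by (rule hom_one'[OF D.gp D.gp lh])
    ultimately show ?thesis using D.pi_id[OF zN] D.N_car[OF zN] by simp
  qed
  show ?thesis unfolding good_rho_def using hom val idZ by blast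
qed

lemma lam_good: "k \<le> m \<Longrightarrow> good_rho k (rho k) \<and> good_lam k (rho k) (lam (Suc k))"
proof (induction k)
  case 0
  have g: "good_rho 0 (rho 0)" unfolding rho_def by (rule rho0)
  then obtain l where "good_lam 0 (rho 0) l" using exists_lam 0 by blast
  then have "good_lam 0 (rho 0) (lam (Suc 0))" unfolding rho_def lam.simps by (metis someI)
  then show ?case using g by simp
next
  case (Suc k)
  then have IH: "good_rho k (rho k)" "good_lam k (rho k) (lam (Suc k))" by auto
  have g: "good_rho (Suc k) (rho (Suc k))" unfolding rho_def using rho_step[OF IH[unfolded rho_def]] .
  then obtain l where "good_lam (Suc k) (rho (Suc k)) l" using exists_lam Suc.prems by blast
  then have "good_lam (Suc k) (rho (Suc k)) (lam (Suc (Suc k)))"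
    unfolding rho_def lam.simps(2)[of "Suc k"] by (metis someI)
  then show ?case using g by simp
qed

lemma rho_good: "k \<le> Suc m \<Longrightarrow> good_rho k (rho k)"
proof -
  assume k: "k \<le> Suc m"
  show ?thesis
  proof (cases "k \<le> m")
    case True then show ?thesis using lam_good by blast
  next
    case False
    then have k': "k = Suc m" using k by simp
    have "good_rho m (rho m)" "good_lam m (rho m) (lam (Suc m))" using lam_good by auto
    then show ?thesis unfolding k' rho_def using rho_step by blast
  qed
qed

definition goodG :: "nat \<Rightarrow> ('a \<Rightarrow> 'b) \<Rightarrow> bool" where
  "goodG k g \<longleftrightarrow> g \<in> hom (D k) (Q (Suc k)) \<and>
     (\<forall>x\<in>carrier (D k). g x \<in> Q.N (Suc k) \<and> f (Suc k) (g x) = s (Suc k) (lam (Suc k) x))"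

definition Gs :: "nat \<Rightarrow> 'a \<Rightarrow> 'b" where "Gs k = (SOME g. goodG k g)"

lemma Gs_good: "k \<le> m \<Longrightarrow> goodG k (Gs k)"
proof -
  assume k: "k \<le> m"
  obtain B :: "'a set" where iso: "D k \<cong> free_Abelian_group B" using free unfolding free_simplicial_def by blast
  have l: "good_lam k (rho k) (lam (Suc k))" using lam_good[OF k] by simp
  then have lh: "lam (Suc k) \<in> hom (D k) (D (Suc k))" and lN: "\<And>x. x \<in> carrier (D k) \<Longrightarrow> lam (Suc k) x \<in> D.N (Suc k)"
    unfolding good_lam_def by auto
  have uh: "(\<lambda>x. s (Suc k) (lam (Suc k) x)) \<in> hom (D k) (P (Suc k))"
    by (rule hom_comp'[OF lh S.h_hom])
  have img: "(\<lambda>x. s (Suc k) (lam (Suc k) x)) ` carrier (D k) \<subseteq> f (Suc k) ` Q.N (Suc k)"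
  proof
    fix p assume "p \<in> (\<lambda>x. s (Suc k) (lam (Suc k) x)) ` carrier (D k)"
    then obtain x where x: "x \<in> carrier (D k)" "p = s (Suc k) (lam (Suc k) x)" by blast
    then have "p \<in> P.N (Suc k)" using S.h_N[OF lN[OF x(1)]] by simp
    then show "p \<in> f (Suc k) ` Q.N (Suc k)" using Nf_surj by blast
  qed
  obtain v where "v \<in> hom (D k) (Q (Suc k))" "\<forall>x\<in>carrier (D k). v x \<in> Q.N (Suc k) \<and> f (Suc k) (v x) = s (Suc k) (lam (Suc k) x)"
    using free_lift[OF iso D.gp Q.cg P.gp F.h_hom Q.N_subgroup uh img] by auto
  then have "goodG k v" unfolding goodG_def by blast
  then show ?thesis unfolding Gs_def by (metis someI)
qed

end


context mainloc begin

lemma Gs_hom: "k \<le> m \<Longrightarrow> Gs k \<in> hom (D k) (Q (Suc k))" using Gs_good unfolding goodG_def by blast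
lemma Gs_N: "k \<le> m \<Longrightarrow> x \<in> carrier (D k) \<Longrightarrow> Gs k x \<in> Q.N (Suc k)" using Gs_good unfolding goodG_def by blast
lemma Gs_f: "k \<le> m \<Longrightarrow> x \<in> carrier (D k) \<Longrightarrow> f (Suc k) (Gs k x) = s (Suc k) (lam (Suc k) x)"
  using Gs_good unfolding goodG_def by blast
lemma Gs_one: "k \<le> m \<Longrightarrow> Gs k \<one>\<^bsub>D k\<^esub> = \<one>\<^bsub>Q (Suc k)\<^esub>" by (rule hom_one'[OF D.gp Q.gp Gs_hom])
lemma Gs_car: "k \<le> m \<Longrightarrow> x \<in> carrier (D k) \<Longrightarrow> Gs k x \<in> carrier (Q (Suc k))" using Gs_N Q.N_car by blast

lemma lam_hom: "k \<le> m \<Longrightarrow> lam (Suc k) \<in> hom (D k) (D (Suc k))" using lam_good unfolding good_lam_def by blast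
lemma lam_N: "k \<le> m \<Longrightarrow> x \<in> carrier (D k) \<Longrightarrow> lam (Suc k) x \<in> D.N (Suc k)" using lam_good unfolding good_lam_def by blast
lemma lam_d0: "k \<le> m \<Longrightarrow> x \<in> carrier (D k) \<Longrightarrow> dD k 0 (lam (Suc k) x) = rho k x" using lam_good unfolding good_lam_def by blast
lemma lam_car: "k \<le> m \<Longrightarrow> x \<in> carrier (D k) \<Longrightarrow> lam (Suc k) x \<in> carrier (D (Suc k))" using lam_N D.N_car by blast

lemma rho_hom: "k \<le> Suc m \<Longrightarrow> rho k \<in> hom (D k) (D k)" using rho_good unfolding good_rho_def by blast
lemma rho_Z: "k \<le> Suc m \<Longrightarrow> x \<in> carrier (D k) \<Longrightarrow> rho k x \<in> Z k" using rho_good unfolding good_rho_def by blast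
lemma rho_id: "k \<le> Suc m \<Longrightarrow> z \<in> Z k \<Longrightarrow> rho k z = z" using rho_good unfolding good_rho_def by blast
lemma rho_car: "k \<le> Suc m \<Longrightarrow> x \<in> carrier (D k) \<Longrightarrow> rho k x \<in> carrier (D k)" using rho_Z Z_N D.N_car by blast

definition psiA :: "nat \<Rightarrow> 'a \<Rightarrow> 'b" where "psiA n y = dQ n 0 (Gs n (rho n y))"
definition psiB :: "nat \<Rightarrow> 'a \<Rightarrow> 'b" where
  "psiB n y = (case n of 0 \<Rightarrow> \<one>\<^bsub>Q 0\<^esub> | Suc q \<Rightarrow> Gs q (dD q 0 y))"
definition psi :: "nat \<Rightarrow> 'a \<Rightarrow> 'b" where
  "psi n y = (if n \<le> m then psiA n y \<otimes>\<^bsub>Q n\<^esub> psiB n y else if n = Suc m then psiB n y else \<one>\<^bsub>Q n\<^esub>)"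

lemma psiA_hom: "n \<le> m \<Longrightarrow> psiA n \<in> hom (D n) (Q n)"
proof -
  assume n: "n \<le> m"
  have "(\<lambda>y. dQ n 0 (Gs n (rho n y))) \<in> hom (D n) (Q n)"
    by (rule hom_comp'[OF hom_comp'[OF rho_hom Gs_hom] Q.d_hom]) (use n in auto)
  then show ?thesis unfolding psiA_def[abs_def] .
qed

lemma psiB_hom: "n \<le> Suc m \<Longrightarrow> psiB n \<in> hom (D n) (Q n)"
proof (cases n)
  case 0
  have "psiB n = (\<lambda>y. \<one>\<^bsub>Q n\<^esub>)" using 0 by (simp add: psiB_def[abs_def])
  then show ?thesis using trivial_hom[OF Q.gp] by simp
next
  case (Suc q)
  assume "n \<le> Suc m"
  then have q: "q \<le> m" using Suc by simp
  have "psiB n = (\<lambda>y. Gs q (dD q 0 y))" using Suc by (simp add: psiB_def[abs_def])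
  moreover have "(\<lambda>y. Gs q (dD q 0 y)) \<in> hom (D (Suc q)) (Q (Suc q))"
    by (rule hom_comp'[OF D.d_hom Gs_hom[OF q]]) simp
  ultimately show ?thesis using Suc by simp
qed

lemma psi_hom: "psi n \<in> hom (D n) (Q n)"
proof -
  consider "n \<le> m" | "n = Suc m" | "n > Suc m" by linarith
  then show ?thesis
  proof cases
    case 1
    have "psi n = (\<lambda>y. psiA n y \<otimes>\<^bsub>Q n\<^esub> psiB n y)" using 1 by (simp add: psi_def[abs_def])
    then show ?thesis using hom_prod[OF Q.cg psiA_hom[OF 1] psiB_hom] 1 by simp
  next
    case 2
    have "psi n = psiB n" using 2 by (simp add: psi_def[abs_def])
    then show ?thesis using psiB_hom 2 by simp
  next
    case 3
    have "psi n = (\<lambda>y. \<one>\<^bsub>Q n\<^esub>)" using 3 by (simp add: psi_def[abs_def])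
    then show ?thesis using trivial_hom[OF Q.gp] by simp
  qed
qed

lemma psiA_N: "n \<le> m \<Longrightarrow> y \<in> carrier (D n) \<Longrightarrow> psiA n y \<in> Q.N n"
  unfolding psiA_def using Q.N_d0 Gs_N rho_car by simp

lemma psiB_N: "n \<le> Suc m \<Longrightarrow> y \<in> carrier (D n) \<Longrightarrow> psiB n y \<in> Q.N n"
  by (cases n) (auto simp: psiB_def Q.N_one Gs_N D.d_car)

lemma psi_N: "x \<in> D.N n \<Longrightarrow> psi n x \<in> Q.N n"
proof -
  assume x: "x \<in> D.N n"
  then have xc: "x \<in> carrier (D n)" by (rule D.N_car)
  show ?thesis
  proof (cases "n \<le> m")
    case True then show ?thesis using psiA_N psiB_N xc Q.N_mult by (simp add: psi_def)
  next
    case False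
    show ?thesis
    proof (cases "n = Suc m")
      case True then show ?thesis using psiB_N[of n x] xc by (simp add: psi_def)
    next
      case False2: False then show ?thesis using False Q.N_one by (simp add: psi_def)
    qed
  qed
qed

lemma psi_chain: "x \<in> D.N (Suc q) \<Longrightarrow> dQ q 0 (psi (Suc q) x) = psi q (dD q 0 x)"
proof -
  assume x: "x \<in> D.N (Suc q)"
  define z where "z = dD q 0 x"
  have zZ: "z \<in> Z q" unfolding z_def by (rule d0_Z[OF x])
  have zc: "z \<in> carrier (D q)" using zZ Z_N D.N_car by blast
  have xc: "x \<in> carrier (D (Suc q))" using x D.N_car by blast
  have zd: "\<And>q'. q = Suc q' \<Longrightarrow> dD q' 0 z = \<one>\<^bsub>D q'\<^esub>" using zZ unfolding Z_def by simp
  consider "Suc q \<le> m" | "q = m" | "Suc q > Suc m" by linarith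
  then show ?thesis
  proof cases
    case 1
    have g1: "Gs (Suc q) (rho (Suc q) x) \<in> Q.N (Suc (Suc q))" using Gs_N 1 rho_car xc by simp
    have A: "dQ q 0 (psiA (Suc q) x) = \<one>\<^bsub>Q q\<^esub>" unfolding psiA_def using Q.N_dd0[OF g1] .
    have Bx: "psiB (Suc q) x = Gs q z" by (simp add: psiB_def z_def)
    have "dQ q 0 (psi (Suc q) x) = dQ q 0 (psiA (Suc q) x) \<otimes>\<^bsub>Q q\<^esub> dQ q 0 (psiB (Suc q) x)"
      unfolding psi_def using 1 psiA_N psiB_N xc Q.N_car by (simp add: Q.d_mult)
    also have "\<dots> = dQ q 0 (Gs q z)" using A Bx Q.d_car Gs_car 1 zc by simp
    also have "\<dots> = psi q z"
    proof -
      have "psiB q z = \<one>\<^bsub>Q q\<^esub>" using zd 1 by (cases q) (auto simp: psiB_def Gs_one)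
      moreover have "rho q z = z" using rho_id 1 zZ by simp
      ultimately show ?thesis using 1 Q.d_car Gs_car zc by (simp add: psi_def psiA_def)
    qed
    finally show ?thesis unfolding z_def .
  next
    case 2
    have "dQ q 0 (psi (Suc q) x) = dQ q 0 (Gs q z)" using 2 by (simp add: psi_def psiB_def z_def)
    also have "\<dots> = psi q z"
    proof -
      have "psiB q z = \<one>\<^bsub>Q q\<^esub>" using zd 2 by (cases q) (auto simp: psiB_def Gs_one)
      moreover have "rho q z = z" using rho_id 2 zZ by simp
      ultimately show ?thesis using 2 Q.d_car Gs_car zc by (simp add: psi_def psiA_def)
    qed
    finally show ?thesis unfolding z_def .
  next
    case 3
    have "dQ q 0 (psi (Suc q) x) = \<one>\<^bsub>Q q\<^esub>" using 3 by (simp add: psi_def Q.d_one)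
    moreover have "psi q z = \<one>\<^bsub>Q q\<^esub>"
    proof (cases "q = Suc m")
      case True
      then show ?thesis using zd Gs_one by (simp add: psi_def psiB_def)
    next
      case False then show ?thesis using 3 by (simp add: psi_def)
    qed
    ultimately show ?thesis unfolding z_def by simp
  qed
qed

lemma fpsi: "n \<le> m \<Longrightarrow> x \<in> D.N n \<Longrightarrow> f n (psi n x) = s n x"
proof -
  assume n: "n \<le> m" and x: "x \<in> D.N n"
  have xc: "x \<in> carrier (D n)" using x D.N_car by blast
  have rc: "rho n x \<in> carrier (D n)" using rho_car n xc by simp
  have fA: "f n (psiA n x) = s n (rho n x)"
  proof -
    have "f n (psiA n x) = dP n 0 (f (Suc n) (Gs n (rho n x)))"
      unfolding psiA_def using F.h_d Gs_car n rc by simp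
    also have "\<dots> = dP n 0 (s (Suc n) (lam (Suc n) (rho n x)))" using Gs_f n rc by simp
    also have "\<dots> = s n (dD n 0 (lam (Suc n) (rho n x)))" using S.h_d lam_car n rc by simp
    also have "\<dots> = s n (rho n (rho n x))" using lam_d0 n rc by simp
    also have "\<dots> = s n (rho n x)" using rho_id rho_Z n xc by simp
    finally show ?thesis .
  qed
  show ?thesis
  proof (cases n)
    case 0
    have "rho 0 x = x" by (simp add: rho_def)
    then show ?thesis using 0 n fA xc psiA_N Q.N_car F.h_one
      by (simp add: psi_def psiB_def F.h_mult)
  next
    case (Suc q)
    have q: "q \<le> m" using n Suc by simp
    have dc: "dD q 0 x \<in> carrier (D q)" using xc Suc D.d_car by simp
    have fB: "f n (psiB n x) = s n (lam (Suc q) (dD q 0 x))"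
      using Suc Gs_f q dc by (simp add: psiB_def)
    have rx: "rho n x = x \<otimes>\<^bsub>D n\<^esub> inv\<^bsub>D n\<^esub> lam (Suc q) (dD q 0 x)"
      using Suc D.pi_id[OF x] by (simp add: rho_def)
    have lc: "lam (Suc q) (dD q 0 x) \<in> carrier (D n)" using lam_car q dc Suc by simp
    have "f n (psi n x) = f n (psiA n x) \<otimes>\<^bsub>P n\<^esub> f n (psiB n x)"
      unfolding psi_def using n psiA_N psiB_N xc Q.N_car by (simp add: F.h_mult)
    also have "\<dots> = s n (rho n x) \<otimes>\<^bsub>P n\<^esub> s n (lam (Suc q) (dD q 0 x))" using fA fB by simp
    also have "\<dots> = s n (rho n x \<otimes>\<^bsub>D n\<^esub> lam (Suc q) (dD q 0 x))" using S.h_mult rc lc by simp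
    also have "rho n x \<otimes>\<^bsub>D n\<^esub> lam (Suc q) (dD q 0 x) = x"
      unfolding rx using xc lc by (simp add: D.m_assoc)
    finally show ?thesis .
  qed
qed

sublocale E: ext2 D dD sD Q dQ sQ psi
  by unfold_locales (auto intro: psi_hom psi_N psi_chain)

lemma skel: "(q, x) \<in> skeleton D dD sD m \<Longrightarrow> x \<in> carrier (D q) \<and> f q (E.tt q x) = s q x"
proof (induction rule: skeleton.induct)
  case (gen k x)
  then show ?case using E.tt_f[OF P.sab_axioms fh sh fpsi] by blast
next
  case (face q x i)
  have t: "E.tt q (dD q i x) = dQ q i (E.tt (Suc q) x)"
    using E.tt_simp face unfolding simplicial_hom_def by blast
  have "f q (dQ q i (E.tt (Suc q) x)) = dP q i (f (Suc q) (E.tt (Suc q) x))"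
    using F.h_d face E.tt_car by blast
  then show ?case using t face S.h_d D.d_car by simp
next
  case (degen q x i)
  have t: "E.tt (Suc q) (sD q i x) = sQ q i (E.tt q x)"
    using E.tt_simp degen unfolding simplicial_hom_def by blast
  have "f (Suc q) (sQ q i (E.tt q x)) = sP q i (f q (E.tt q x))"
    using F.h_s degen E.tt_car by blast
  then show ?case using t degen S.h_s D.s_car by simp
qed

lemma main: "\<exists>t. simplicial_hom D dD sD Q dQ sQ t \<and> (\<forall>(q, x) \<in> skeleton D dD sD m. f q (t q x) = s q x)"
  using E.tt_simp skel by blast

end
theorem mainTheorem8:
  fixes D :: "nat \<Rightarrow> ('a, 'm1) monoid_scheme" and dD sD :: "nat \<Rightarrow> nat \<Rightarrow> 'a \<Rightarrow> 'a"
    and Q :: "nat \<Rightarrow> ('b, 'm2) monoid_scheme" and dQ sQ :: "nat \<Rightarrow> nat \<Rightarrow> 'b \<Rightarrow> 'b"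
    and P :: "nat \<Rightarrow> ('c, 'm3) monoid_scheme" and dP sP :: "nat \<Rightarrow> nat \<Rightarrow> 'c \<Rightarrow> 'c"
    and s :: "nat \<Rightarrow> 'a \<Rightarrow> 'c" and f :: "nat \<Rightarrow> 'b \<Rightarrow> 'c" and m :: nat
  assumes "simplicial_abgroup D dD sD"
    and "simplicial_abgroup Q dQ sQ"
    and "simplicial_abgroup P dP sP"
    and "simplicial_hom D dD sD P dP sP s"
    and "simplicial_hom Q dQ sQ P dP sP f"
    and "free_simplicial D"
    and "m_connected m D dD"
    and "\<forall>q. f q ` carrier (Q q) = carrier (P q)"
  shows "\<exists>t. simplicial_hom D dD sD Q dQ sQ t \<and>
    (\<forall>(q, x) \<in> skeleton D dD sD m. f q (t q x) = s q x)"
proof -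
  interpret M: mainloc D dD sD Q dQ sQ P dP sP s f m
    using assms by (simp add: mainloc_def mainloc_axioms_def sab_def)
  show ?thesis by (rule M.main)
qed

end
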